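(* Let $E$ be a set of finite measure and let $(F_n)\subset L^{3/2}(E,\mathbb{R}^3)$ be bounded. Assume that for some $F\in L^{3/2}(E,\mathbb{R}^3)$ and some $\theta>0$ one has $$\left(\left(|F_n|^{-1/2}F_n-|F|^{-1/2}F\right)\cdot(F_n-F)\right)^\theta\to0\quad\text{in }L^1(E).$$ Then $F_n\to F$ in $L^p(E,\mathbb{R}^3)$ for any $1\le p<3/2$.
   Context: $|v|^{-1/2}v$ is interpreted as $0$ where $v=0$. *)

theory Defs
  imports "HOL-Analysis.Analysis"
begin

definition halfweight :: "real ^ 3 \<Rightarrow> real ^ 3" where
  "halfweight v = (if v = 0 then 0 else (norm v powr (-1/2)) *\<^sub>R v)"

definition in_Lp_on :: "'a measure \<Rightarrow> 'a set \<Rightarrow> real \<Rightarrow> ('a \<Rightarrow> real ^ 3) \<Rightarrow> bool" where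
  "in_Lp_on M E p f \<longleftrightarrow> f \<in> borel_measurable M \<and> set_integrable M E (\<lambda>x. norm (f x) powr p)"

end

theory Submission
  imports Defs
begin

lemma hw0[simp]: "halfweight 0 = 0" by (simp add: halfweight_def)

lemma hw_eq: "v \<noteq> 0 \<Longrightarrow> halfweight v = (1 / sqrt (norm v)) *\<^sub>R v"
  by (simp add: halfweight_def powr_minus_divide powr_half_sqrt)

lemma key_alg:
  fixes x y c :: real
  assumes "x > 0" "y > 0" "c \<le> x^2 * y^2"
  shows "x^4 - 2*c + y^4 \<le> (x+y) * (x^3 - c/x - c/y + y^3)"
proof -
  have "(x+y) * (x^3 - c/x - c/y + y^3) - (x^4 - 2*c + y^4) = (x^2+y^2)*(x^2*y^2-c)/(x*y)"
    using assms by (simp add: field_simps) (simp add: algebra_simps power2_eq_square power3_eq_cube power4_eq_xxxx)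
  moreover have "(x^2+y^2)*(x^2*y^2-c)/(x*y) \<ge> 0" using assms by simp
  ultimately show ?thesis by linarith
qed

lemma key:
  fixes a b :: "real^3"
  shows "(norm (a-b))^2 \<le> (sqrt (norm a) + sqrt (norm b)) * inner (halfweight a - halfweight b) (a - b)"
proof (cases "a = 0")
  case True
  show ?thesis
  proof (cases "b = 0")
    case True with \<open>a=0\<close> show ?thesis by (simp add: halfweight_def)
  next
    case False
    define y where "y = sqrt (norm b)"
    have y: "y > 0" "norm b = y^2" using False by (auto simp: y_def)
    have "inner (halfweight a - halfweight b) (a - b) = (1/y) * (norm b)^2"
      using True False by (simp add: hw_eq y_def power2_norm_eq_inner)
    then show ?thesis using True y by (simp add: field_simps power2_eq_square)
  qed
next
  case False
  define x where "x = sqrt (norm a)"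
  have x: "x > 0" "norm a = x^2" using False by (auto simp: x_def)
  show ?thesis
  proof (cases "b = 0")
    case True
    have "inner (halfweight a - halfweight b) (a - b) = (1/x) * (norm a)^2"
      using True False by (simp add: hw_eq x_def power2_norm_eq_inner)
    then show ?thesis using True x by (simp add: field_simps power2_eq_square)
  next
    case bF: False
    define y where "y = sqrt (norm b)"
    have y: "y > 0" "norm b = y^2" using bF by (auto simp: y_def)
    define c where "c = inner a b"
    have c: "c \<le> x^2*y^2" using norm_cauchy_schwarz[of a b] x y by (simp add: c_def)
    have I: "inner (halfweight a - halfweight b) (a - b) = x^3 - c/x - c/y + y^3"
      using False bF x y
      by (simp add: hw_eq flip: x_def y_def c_def add: inner_diff_left inner_diff_right inner_commute[of b a]
            power2_norm_eq_inner[symmetric]) (simp add: field_simps power2_eq_square power3_eq_cube, simp add: eval_nat_numeral algebra_simps)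
    have N: "(norm (a-b))^2 = x^4 - 2*c + y^4"
      using x y by (simp add: power2_norm_eq_inner inner_diff_left inner_diff_right inner_commute[of b a] c_def)
        (simp add: power2_norm_eq_inner[symmetric])
    show ?thesis unfolding I N using key_alg[OF x(1) y(1) c] x y by simp
  qed
qed

lemma pw_real:
  fixes w A B D p \<delta> M \<theta> :: real
  assumes p: "1 \<le> p" "p < 3/2" and nn: "w \<ge> 0" "A \<ge> 0" "B \<ge> 0" "D \<ge> 0"
    and wAB: "w \<le> A + B" and w2: "w^2 \<le> (sqrt A + sqrt B) * D"
    and pos: "\<delta> > 0" "M > 0" "\<theta> > 0"
  shows "w powr p \<le> ((2*\<delta>) powr (p/2) + 2 powr p * M powr (p-3/2)) * (1 + A powr (3/2) + B powr (3/2))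
           + (2*M) powr p / \<delta> powr \<theta> * D powr \<theta>"
proof -
  define R where "R = max 1 (max A B)"
  define N where "N = 1 + A powr (3/2) + B powr (3/2)"
  have R1: "R \<ge> 1" by (simp add: R_def)
  have RN: "R powr (3/2) \<le> N"
    unfolding R_def N_def using nn by (auto simp: max_def)
  have N0: "N \<ge> 0" by (simp add: N_def add_nonneg_nonneg)
  have sq: "sqrt A + sqrt B \<le> 2 * sqrt R"
    using real_sqrt_le_mono[of A R] real_sqrt_le_mono[of B R] unfolding R_def by linarith
  have w2R: "w \<le> 2 * R" using wAB by (simp add: R_def)
  have T0: "0 \<le> ((2*\<delta>) powr (p/2) + 2 powr p * M powr (p-3/2)) * N" using N0 by simp
  have T1: "0 \<le> (2*M) powr p / \<delta> powr \<theta> * D powr \<theta>" by simp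
  have wp: "w powr p = (w^2) powr (p/2)"
  proof (cases "w = 0")
    case True then show ?thesis using p by simp
  next
    case False
    then have "w^2 = w powr 2" using nn by (simp add: powr_realpow)
    then show ?thesis by (simp add: powr_powr)
  qed
  have "w powr p \<le> ((2*\<delta>) powr (p/2) + 2 powr p * M powr (p-3/2)) * N + (2*M) powr p / \<delta> powr \<theta> * D powr \<theta>"
  proof (cases "D \<le> \<delta>")
    case True
    have "w^2 \<le> 2 * sqrt R * \<delta>"
    proof -
      have "(sqrt A + sqrt B)*D \<le> (2 * sqrt R)*\<delta>" by (rule mult_mono[OF sq True]) (use nn R1 in auto)
      then show ?thesis using w2 by (simp add: mult_ac)
    qed
    then have "w powr p \<le> (2 * sqrt R * \<delta>) powr (p/2)"
      unfolding wp using p by (intro powr_mono2) auto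
    also have "\<dots> = (2*\<delta>) powr (p/2) * (sqrt R) powr (p/2)"
      using R1 pos by (simp add: powr_mult[symmetric] mult_ac)
    also have "(sqrt R) powr (p/2) = R powr (p/4)"
      using R1 by (simp add: powr_half_sqrt[symmetric] powr_powr)
    also have "R powr (p/4) \<le> R powr (3/2)" using R1 p by (intro powr_mono) auto
    then have "(2*\<delta>) powr (p/2) * R powr (p/4) \<le> (2*\<delta>) powr (p/2) * N"
      using RN by (intro mult_left_mono) auto
    finally have "w powr p \<le> (2*\<delta>) powr (p/2) * N" by simp
    moreover have "(2*\<delta>) powr (p/2) * N \<le> ((2*\<delta>) powr (p/2) + 2 powr p * M powr (p-3/2)) * N"
      using N0 by (intro mult_right_mono) auto
    ultimately show ?thesis using T1 by linarith
  next
    case False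
    show ?thesis
    proof (cases "R \<le> M")
      case True
      have "w powr p \<le> (2*M) powr p" using w2R True nn p by (intro powr_mono2) auto
      also have "\<dots> \<le> (2*M) powr p * (D/\<delta>) powr \<theta>"
      proof -
        have "1 \<le> (D/\<delta>) powr \<theta>" using False pos by (intro ge_one_powr_ge_zero) auto
        from mult_left_mono[OF this, of "(2*M) powr p"] show ?thesis by simp
      qed
      also have "\<dots> = (2*M) powr p / \<delta> powr \<theta> * D powr \<theta>"
        using pos nn by (simp add: powr_divide)
      finally show ?thesis using T0 by linarith
    next
      case RM: False
      have "w powr p \<le> (2*R) powr p" using w2R nn p by (intro powr_mono2) auto
      also have "\<dots> = 2 powr p * R powr (p - 3/2) * R powr (3/2)"
        using R1 by (simp add: powr_mult powr_add[symmetric])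
      also have "\<dots> \<le> 2 powr p * M powr (p - 3/2) * N"
      proof -
        have "R powr (p - 3/2) \<le> M powr (p - 3/2)" using powr_mono2'[of "p-3/2" M R] p pos RM by auto
        then have "2 powr p * R powr (p - 3/2) \<le> 2 powr p * M powr (p - 3/2)" by (rule mult_left_mono) simp
        then show ?thesis by (rule mult_mono) (use RN in auto)
      qed
      also have "\<dots> \<le> ((2*\<delta>) powr (p/2) + 2 powr p * M powr (p-3/2)) * N"
        using N0 by (intro mult_right_mono) auto
      finally show ?thesis using T1 by linarith
    qed
  qed
  then show ?thesis by (simp add: N_def)
qed


lemma choose:
  fixes p \<eta> :: real
  assumes p: "1 \<le> p" "p < 3/2" and e: "\<eta> > 0"
  shows "\<exists>\<delta> M. \<delta> > 0 \<and> M > 0 \<and> (2*\<delta>) powr (p/2) + 2 powr p * M powr (p-3/2) \<le> \<eta>"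
proof -
  define \<delta> where "\<delta> = (\<eta>/2) powr (2/p) / 2"
  define M where "M = (\<eta>/(2 * 2 powr p)) powr (1/(p-3/2))"
  have d: "\<delta> > 0" using e by (simp add: \<delta>_def)
  have m: "M > 0" using e by (simp add: M_def)
  have 1: "(2*\<delta>) powr (p/2) = \<eta>/2" using e p by (simp add: \<delta>_def powr_powr)
  have 2: "M powr (p-3/2) = \<eta>/(2 * 2 powr p)" using e p by (simp add: M_def powr_powr)
  have "2 powr p * (\<eta>/(2 * 2 powr p)) = \<eta>/2" by simp
  then show ?thesis using d m 1 2 by (intro exI[of _ \<delta>] exI[of _ M]) simp
qed

lemma D_nonneg:
  fixes a b :: "real^3"
  shows "inner (halfweight a - halfweight b) (a - b) \<ge> 0"
proof (cases "a = 0 \<and> b = 0")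
  case True then show ?thesis by simp
next
  case False
  then have "sqrt (norm a) + sqrt (norm b) > 0"
  proof (cases "a = 0")
    case True
    with False have "norm b > 0" by simp
    then show ?thesis using True by simp
  next
    case False
    then have "norm a > 0" by simp
    then show ?thesis by (simp add: add_pos_nonneg)
  qed
  moreover have "0 \<le> (sqrt (norm a) + sqrt (norm b)) * inner (halfweight a - halfweight b) (a - b)"
    using key[of a b] by (smt (verit) zero_le_power2)
  ultimately show ?thesis by (simp add: zero_le_mult_iff)
qed

lemma pw_vec:
  fixes a b :: "real^3" and p \<delta> M \<theta> :: real
  assumes p: "1 \<le> p" "p < 3/2" and pos: "\<delta> > 0" "M > 0" "\<theta> > 0"
  shows "norm (a - b) powr p \<le> ((2*\<delta>) powr (p/2) + 2 powr p * M powr (p-3/2)) * (1 + norm a powr (3/2) + norm b powr (3/2))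
           + (2*M) powr p / \<delta> powr \<theta> * (inner (halfweight a - halfweight b) (a - b)) powr \<theta>"
  by (rule pw_real[OF p norm_ge_zero norm_ge_zero norm_ge_zero D_nonneg norm_triangle_ineq4 key pos])


lemma set_int_nonneg:
  fixes f :: "'a \<Rightarrow> real"
  assumes "\<And>x. f x \<ge> 0"
  shows "0 \<le> (LINT x:E|M. f x)"
  unfolding set_lebesgue_integral_def
  by (rule Bochner_Integration.integral_nonneg) (simp add: assms)

theorem lemma8p2:
  fixes M :: "'a measure" and E :: "'a set"
    and Fs :: "nat \<Rightarrow> 'a \<Rightarrow> real ^ 3" and F :: "'a \<Rightarrow> real ^ 3" and \<theta> :: real
  assumes E_meas: "E \<in> sets M" and E_fin: "emeasure M E < \<infinity>"
    and Fs_Lp: "\<And>n. in_Lp_on M E (3/2) (Fs n)"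
    and Fs_bdd: "\<exists>C. \<forall>n. (LINT x:E|M. norm (Fs n x) powr (3/2)) \<le> C"
    and F_Lp: "in_Lp_on M E (3/2) F"
    and theta_pos: "\<theta> > 0"
    and G_L1: "\<And>n. set_integrable M E
        (\<lambda>x. (inner (halfweight (Fs n x) - halfweight (F x)) (Fs n x - F x)) powr \<theta>)"
    and G_lim: "(\<lambda>n. LINT x:E|M.
        \<bar>(inner (halfweight (Fs n x) - halfweight (F x)) (Fs n x - F x)) powr \<theta>\<bar>)
        \<longlonglongrightarrow> 0"
  shows "\<forall>p::real. 1 \<le> p \<and> p < 3/2 \<longrightarrow>
           (\<lambda>n. LINT x:E|M. norm (Fs n x - F x) powr p) \<longlonglongrightarrow> 0"
proof (intro allI impI)
  fix p :: real
  assume "1 \<le> p \<and> p < 3/2"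
  then have p: "1 \<le> p" "p < 3/2" by auto
  obtain C where C: "\<And>n. (LINT x:E|M. norm (Fs n x) powr (3/2)) \<le> C" using Fs_bdd by auto
  define G where "G n x = (inner (halfweight (Fs n x) - halfweight (F x)) (Fs n x - F x)) powr \<theta>" for n x
  define W where "W n x = norm (Fs n x - F x) powr p" for n x
  define m where "m = measure M E"
  define IF where "IF = (LINT x:E|M. norm (F x) powr (3/2))"
  define Q where "Q = m + C + IF"
  have m0: "m \<ge> 0" by (simp add: m_def)
  have IF0: "IF \<ge> 0" unfolding IF_def by (rule set_int_nonneg) simp
  have "0 \<le> (LINT x:E|M. norm (Fs 0 x) powr (3/2))" by (rule set_int_nonneg) simp
  then have C0: "C \<ge> 0" using C[of 0] by linarith
  have Q0: "Q \<ge> 0" using m0 IF0 C0 by (simp add: Q_def)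
  have G0: "G n x \<ge> 0" for n x by (simp add: G_def)
  have intG: "set_integrable M E (G n)" for n using G_L1[of n] unfolding G_def[abs_def] by simp
  have limG: "(\<lambda>n. LINT x:E|M. G n x) \<longlonglongrightarrow> 0" using G_lim by (simp add: G_def)
  have int1: "set_integrable M E (\<lambda>x. 1::real)"
    using E_meas E_fin by (simp add: set_integrable_def)
  have intPhi: "set_integrable M E (\<lambda>x. norm (Fs n x) powr (3/2))" for n
    using Fs_Lp[of n] by (simp add: in_Lp_on_def)
  have intPhiF: "set_integrable M E (\<lambda>x. norm (F x) powr (3/2))"
    using F_Lp by (simp add: in_Lp_on_def)
  have measFs: "Fs n \<in> borel_measurable M" for n
    using Fs_Lp[of n] by (simp add: in_Lp_on_def)
  have measF: "F \<in> borel_measurable M"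
    using F_Lp by (simp add: in_Lp_on_def)
  have intN: "set_integrable M E (\<lambda>x. 1 + norm (Fs n x) powr (3/2) + norm (F x) powr (3/2))" for n
    using int1 intPhi intPhiF by auto
  have intN_eq: "(LINT x:E|M. 1 + norm (Fs n x) powr (3/2) + norm (F x) powr (3/2))
       = m + (LINT x:E|M. norm (Fs n x) powr (3/2)) + IF" for n
    using int1 intPhi[of n] intPhiF E_meas E_fin
    by (simp add: set_integral_const m_def IF_def less_top)
  have bound: "(LINT x:E|M. W n x) \<le> c1 * Q + c2 * (LINT x:E|M. G n x)"
    if c: "c1 = (2*\<delta>) powr (p/2) + 2 powr p * K powr (p-3/2)" "c2 = (2*K) powr p / \<delta> powr \<theta>"
      and pos: "\<delta> > 0" "K > 0" for n c1 c2 \<delta> K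
  proof -
    define B where "B x = c1 * (1 + norm (Fs n x) powr (3/2) + norm (F x) powr (3/2)) + c2 * G n x" for x
    have WB: "W n x \<le> B x" for x
      unfolding W_def B_def G_def c using pw_vec[OF p pos theta_pos] by blast
    have intB: "set_integrable M E B"
      unfolding B_def using intN[of n] intG[of n] by auto
    have measW: "set_borel_measurable M E (W n)"
      unfolding set_borel_measurable_def W_def[abs_def] using measFs[of n] measF E_meas by measurable
    have intW: "set_integrable M E (W n)"
      by (rule set_integrable_bound[OF intB measW]) (auto simp: W_def intro!: order_trans[OF _ abs_ge_self] WB[unfolded W_def])
    have "(LINT x:E|M. W n x) \<le> (LINT x:E|M. B x)"
      by (rule set_integral_mono[OF intW intB WB])
    also have "(LINT x:E|M. B x) = c1 * (m + (LINT x:E|M. norm (Fs n x) powr (3/2)) + IF) + c2 * (LINT x:E|M. G n x)"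
      unfolding B_def using intN[of n] intG[of n] by (simp add: intN_eq)
    also have "\<dots> \<le> c1 * Q + c2 * (LINT x:E|M. G n x)"
      unfolding Q_def using C[of n] c pos by (intro add_right_mono mult_left_mono) auto
    finally show ?thesis .
  qed
  show "(\<lambda>n. LINT x:E|M. W n x) \<longlonglongrightarrow> 0"
  proof (rule LIMSEQ_I)
    fix r :: real assume r: "r > 0"
    define \<eta> where "\<eta> = r / (2 * (Q + 1))"
    have \<eta>: "\<eta> > 0" using r Q0 by (simp add: \<eta>_def)
    obtain \<delta> K where dK: "\<delta> > 0" "K > 0" and le: "(2*\<delta>) powr (p/2) + 2 powr p * K powr (p-3/2) \<le> \<eta>"
      using choose[OF p \<eta>] by auto
    define c1 where "c1 = (2*\<delta>) powr (p/2) + 2 powr p * K powr (p-3/2)"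
    define c2 where "c2 = (2*K) powr p / \<delta> powr \<theta>"
    have c2: "c2 \<ge> 0" by (simp add: c2_def)
    have c1Q: "c1 * Q < r/2"
    proof -
      have "c1 * Q \<le> \<eta> * Q" using le Q0 by (intro mult_right_mono) (auto simp: c1_def)
      also have "\<eta> * Q < \<eta> * (Q + 1)" using \<eta> by simp
      also have "\<eta> * (Q + 1) = r/2" using Q0 by (simp add: \<eta>_def field_simps)
      finally show ?thesis .
    qed
    obtain no where no: "\<And>n. n \<ge> no \<Longrightarrow> norm ((LINT x:E|M. G n x) - 0) < r / (2 * (c2 + 1))"
      using LIMSEQ_D[OF limG, of "r / (2 * (c2 + 1))"] r c2 by auto
    show "\<exists>no. \<forall>n\<ge>no. norm ((LINT x:E|M. W n x) - 0) < r"
    proof (intro exI allI impI)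
      fix n assume n: "n \<ge> no"
      have IG0: "0 \<le> (LINT x:E|M. G n x)" by (rule set_int_nonneg) (rule G0)
      have IW0: "0 \<le> (LINT x:E|M. W n x)" by (rule set_int_nonneg) (simp add: W_def)
      have "(LINT x:E|M. G n x) < r / (2 * (c2 + 1))" using no[OF n] IG0 by simp
      then have "(c2 + 1) * (LINT x:E|M. G n x) < r / 2"
        using c2 by (simp add: field_simps)
      moreover have "c2 * (LINT x:E|M. G n x) \<le> (c2 + 1) * (LINT x:E|M. G n x)"
        using IG0 by (simp add: distrib_right)
      ultimately have "c2 * (LINT x:E|M. G n x) < r/2" by linarith
      then have "(LINT x:E|M. W n x) < r"
        using bound[OF c1_def c2_def dK, of n] c1Q by linarith
      then show "norm ((LINT x:E|M. W n x) - 0) < r" using IW0 by simp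
    qed
  qed
qed

end
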